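(* Let $(\beta_k)_{k\in\mathbb{N}}$ be a sequence of real numbers. The multi-indexed sequence $$\bar F_{n_1,\ldots,n_d}=\prod_{k=1}^d\beta_k^{n_{(d-k+1)}-n_{(d-k)}},\qquad n_1,\ldots,n_d\in\mathbb{N}_0,$$ is a $d$-dimensional discrete survival function for every $d\ge2$ if and only if $(1,\beta_1,\beta_2,\ldots)\in\mathcal{M}_\infty$. In that case it defines, for each $d$, an infinitely extendible exchangeable wide-sense geometric law.
   Context: $\mathbb{N}_0=\{0,1,\ldots\}$; $n_{(0)}:=0\le n_{(1)}\le\cdots\le n_{(d)}$ is the ordered list of $n_1,\ldots,n_d$; $0^0:=1$. A discrete survival function is $\mathbb{P}(\tau_1>n_1,\ldots,\tau_d>n_d)$ for some $\mathbb{N}^d$-valued random vector. $\nabla^jx_k:=\sum_{i=0}^j(-1)^i\binom{j}{i}x_{k+i}$; $\mathcal{M}_\infty:=\{(x_k)_{k\in\mathbb{N}_0}: x_0=1,\ x_1<1,\ \nabla^jx_k\ge0\ \forall j,k\in\mathbb{N}_0\}$. Wide-sense geometric law: for $\tilde p_I\in[0,1]$, $I\subseteq\{1,\ldots,d\}$, $\sum_I\tilde p_I=1$, $\sum_{I\not\ni k}\tilde p_I<1$, run i.i.d. trials with outcome $I$ of probability $\tilde p_I$, $\tilde E_I$ the first trial with outcome $I$, $\tau_k=\min\{\tilde E_I:k\in I\}$. Infinitely extendible: there exists an infinite exchangeable sequence $(\tau_k)_{k\in\mathbb{N}}$ such that $(\tau_1,\ldots,\tau_m)$ is exchangeable wide-sense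 geometric for every $m$ and $(\tau_1,\ldots,\tau_d)$ has the given law. *)

theory Defs
  imports "HOL-Probability.Probability"
begin

definition ordstat :: "nat list \<Rightarrow> nat \<Rightarrow> nat" where
  "ordstat n k = (0 # sort n) ! k"

definition Fbar :: "(nat \<Rightarrow> real) \<Rightarrow> nat \<Rightarrow> nat list \<Rightarrow> real" where
  "Fbar \<beta> d n = (\<Prod>k=1..d. \<beta> k ^ (ordstat n (d - k + 1) - ordstat n (d - k)))"

definition nabla :: "(nat \<Rightarrow> real) \<Rightarrow> nat \<Rightarrow> nat \<Rightarrow> real" where
  "nabla x j k = (\<Sum>i=0..j. (-1) ^ i * of_nat (j choose i) * x (k + i))"

definition M_infty :: "(nat \<Rightarrow> real) set" where
  "M_infty = {x. x 0 = 1 \<and> x 1 < 1 \<and> (\<forall>j k. nabla x j k \<ge> 0)}"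

text \<open>Laws of N^d-valued random vectors (N = positive integers), as pmfs on lists of length d.\<close>
definition is_law_on :: "nat \<Rightarrow> nat list pmf \<Rightarrow> bool" where
  "is_law_on d p \<longleftrightarrow> set_pmf p \<subseteq> {t. length t = d \<and> (\<forall>i<d. 0 < t ! i)}"

definition survival_pmf :: "nat list pmf \<Rightarrow> nat list \<Rightarrow> real" where
  "survival_pmf p n = measure_pmf.prob p {t. \<forall>i<length n. n ! i < t ! i}"

definition has_survival :: "nat \<Rightarrow> nat list pmf \<Rightarrow> (nat list \<Rightarrow> real) \<Rightarrow> bool" where
  "has_survival d p F \<longleftrightarrow> is_law_on d p \<and> (\<forall>n. length n = d \<longrightarrow> survival_pmf p n = F n)"

definition is_discrete_survival :: "nat \<Rightarrow> (nat list \<Rightarrow> real) \<Rightarrow> bool" where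
  "is_discrete_survival d F \<longleftrightarrow> (\<exists>p. has_survival d p F)"

text \<open>Trials are indexed 1,2,...; the outcome of trial i+1 is
  the (i)-th element of a stream of i.i.d. outcomes (subsets of the 0-based index set
  {0..<d}); tau_k = number of the first trial whose outcome contains k.\<close>
definition wsg_times :: "nat \<Rightarrow> nat set stream \<Rightarrow> nat list" where
  "wsg_times d \<omega> = map (\<lambda>k. Suc (LEAST i. k \<in> \<omega> !! i)) [0..<d]"

definition is_wsg_law :: "nat \<Rightarrow> nat list pmf \<Rightarrow> bool" where
  "is_wsg_law d p \<longleftrightarrow> (\<exists>q :: nat set pmf.
      set_pmf q \<subseteq> Pow {0..<d} \<and>
      (\<forall>k<d. measure_pmf.prob q {I. k \<notin> I} < 1) \<and>
      measure_pmf p = distr (stream_space (measure_pmf q)) (count_space UNIV) (wsg_times d))"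

definition exchangeable_law :: "nat \<Rightarrow> nat list pmf \<Rightarrow> bool" where
  "exchangeable_law d p \<longleftrightarrow>
     (\<forall>\<pi>. \<pi> permutes {0..<d} \<longrightarrow> map_pmf (\<lambda>t. map (\<lambda>i. t ! \<pi> i) [0..<d]) p = p)"

text \<open>Infinite extendibility: a law P of an infinite sequence (tau_1, tau_2, ...) whose
  m-dimensional marginals are exchangeable wide-sense geometric for every m \<ge> 1
  (hence the sequence is exchangeable), and whose d-marginal is p.\<close>
definition infinitely_extendible :: "nat \<Rightarrow> nat list pmf \<Rightarrow> bool" where
  "infinitely_extendible d p \<longleftrightarrow>
     (\<exists>P :: nat stream measure. prob_space P \<and>
        sets P = sets (stream_space (count_space UNIV)) \<and>
        (\<forall>m\<ge>1. \<exists>pm. measure_pmf pm = distr P (count_space UNIV) (stake m) \<and>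
                  exchangeable_law m pm \<and> is_wsg_law m pm \<and> (m = d \<longrightarrow> pm = p)))"

end

theory Submission
  imports Defs
begin


lemma nabla_0[simp]: "nabla x 0 k = x k"
  by (simp add: nabla_def)

lemma nabla_Suc: "nabla x (Suc j) k = nabla x j k - nabla x j (Suc k)"
proof -
  have "nabla x (Suc j) k = (\<Sum>i=0..Suc j. (-1) ^ i * of_nat (j choose i) * x (k + i))
        + (\<Sum>i=0..Suc j. (-1) ^ i * of_nat (if i = 0 then 0 else j choose (i - 1)) * x (k + i))"
    unfolding nabla_def sum.distrib[symmetric]
  proof (intro sum.cong refl)
    fix i assume "i \<in> {0..Suc j}"
    show "(-1) ^ i * of_nat (Suc j choose i) * x (k + i) =
      (-1) ^ i * of_nat (j choose i) * x (k + i) +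
      (-1) ^ i * of_nat (if i = 0 then 0 else j choose (i - 1)) * x (k + i)"
      by (cases i) (simp_all add: algebra_simps)
  qed
  also have "(\<Sum>i=0..Suc j. (-1) ^ i * of_nat (j choose i) * x (k + i)) = nabla x j k"
    by (simp add: nabla_def)
  also have "(\<Sum>i=0..Suc j. (-1) ^ i * of_nat (if i = 0 then 0 else j choose (i - 1)) * x (k + i))
       = (\<Sum>i=0..j. (-1) ^ Suc i * of_nat (j choose i) * x (k + Suc i))"
    by (subst sum.atLeast0_atMost_Suc_shift) simp
  also have "\<dots> = - nabla x j (Suc k)"
    by (simp add: nabla_def sum_negf[symmetric])
  finally show ?thesis by simp
qed


lemma sum_Pow_nabla:
  assumes "finite K"
  shows "(\<Sum>A\<in>Pow K. nabla x (card A) (k + card K - card A)) = x k"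
  using assms
proof (induction K rule: finite_induct)
  case empty
  then show ?case by simp
next
  case (insert e K)
  have disj: "Pow K \<inter> insert e ` Pow K = {}" using insert by auto
  have inj: "inj_on (insert e) (Pow K)" using insert
    by (smt (verit, ccfv_SIG) PowD inj_onI insert_ident subset_iff)
  have fin: "finite (Pow K)" using insert by simp
  have cK: "card (insert e K) = Suc (card K)" using insert by simp
  have "(\<Sum>A\<in>Pow (insert e K). nabla x (card A) (k + card (insert e K) - card A))
     = (\<Sum>A\<in>Pow K. nabla x (card A) (Suc (k + card K - card A)))
       + (\<Sum>A\<in>Pow K. nabla x (Suc (card A)) (k + card K - card A))"
  proof -
    have 1: "(\<Sum>A\<in>Pow K. nabla x (card A) (k + card (insert e K) - card A))
        = (\<Sum>A\<in>Pow K. nabla x (card A) (Suc (k + card K - card A)))"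
    proof (intro sum.cong refl)
      fix A assume "A \<in> Pow K"
      then have "card A \<le> card K" using insert by (simp add: card_mono)
      then show "nabla x (card A) (k + card (insert e K) - card A) = nabla x (card A) (Suc (k + card K - card A))"
        using cK by (simp add: Suc_diff_le)
    qed
    have 2: "(\<Sum>A\<in>insert e ` Pow K. nabla x (card A) (k + card (insert e K) - card A))
        = (\<Sum>A\<in>Pow K. nabla x (Suc (card A)) (k + card K - card A))"
    proof (subst sum.reindex[OF inj], unfold comp_def, intro sum.cong refl)
      fix A assume A: "A \<in> Pow K"
      then have "e \<notin> A" "finite A" using insert finite_subset by auto
      then show "nabla x (card (insert e A)) (k + card (insert e K) - card (insert e A)) =
           nabla x (Suc (card A)) (k + card K - card A)" using cK by simp
    qed
    show ?thesis
      unfolding Pow_insert using 1 2 disj fin by (simp add: sum.union_disjoint)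
  qed
  also have "\<dots> = (\<Sum>A\<in>Pow K. nabla x (card A) (k + card K - card A))"
    by (simp add: nabla_Suc sum.distrib[symmetric] sum_subtractf)
  finally show ?case using insert by simp
qed

definition wt :: "(nat \<Rightarrow> real) \<Rightarrow> nat set \<Rightarrow> nat set \<Rightarrow> real" where
  "wt x K A = (if A \<subseteq> K then nabla x (card A) (card K - card A) else 0)"

definition cm :: "(nat \<Rightarrow> real) \<Rightarrow> bool" where
  "cm x \<longleftrightarrow> x 0 = 1 \<and> (\<forall>j k. nabla x j k \<ge> 0)"

definition pJ :: "(nat \<Rightarrow> real) \<Rightarrow> nat set \<Rightarrow> nat set pmf" where
  "pJ x K = embed_pmf (wt x K)"

lemma wt_nonneg: "cm x \<Longrightarrow> wt x K A \<ge> 0"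
  by (simp add: wt_def cm_def)

lemma wt_integral:
  assumes "cm x" "finite K"
  shows "(\<integral>\<^sup>+ A. ennreal (wt x K A) \<partial>count_space UNIV) = 1"
proof -
  have "(\<integral>\<^sup>+ A. ennreal (wt x K A) \<partial>count_space UNIV) = (\<Sum>A\<in>Pow K. ennreal (wt x K A))"
    by (rule nn_integral_count_space') (use assms in \<open>auto simp: wt_def\<close>)
  also have "\<dots> = ennreal (\<Sum>A\<in>Pow K. wt x K A)"
    by (rule sum_ennreal) (use wt_nonneg[OF assms(1)] in auto)
  also have "(\<Sum>A\<in>Pow K. wt x K A) = (\<Sum>A\<in>Pow K. nabla x (card A) (0 + card K - card A))"
    by (simp add: wt_def)
  also have "\<dots> = 1" using sum_Pow_nabla[OF assms(2), of x 0] assms(1) by (simp add: cm_def)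
  finally show ?thesis by simp
qed

lemma pmf_pJ: "cm x \<Longrightarrow> finite K \<Longrightarrow> pmf (pJ x K) A = wt x K A"
  unfolding pJ_def by (rule pmf_embed_pmf) (auto intro: wt_nonneg wt_integral)

lemma set_pJ: "cm x \<Longrightarrow> finite K \<Longrightarrow> set_pmf (pJ x K) \<subseteq> Pow K"
  by (auto simp: set_pmf_iff pmf_pJ wt_def split: if_splits)

lemma prob_pJ_sum:
  assumes "cm x" "finite K"
  shows "measure_pmf.prob (pJ x K) X = (\<Sum>A\<in>X \<inter> Pow K. wt x K A)"
proof -
  have "measure_pmf.prob (pJ x K) X = measure_pmf.prob (pJ x K) (X \<inter> Pow K)"
    using set_pJ[OF assms] by (metis inf.absorb_iff2 inf_assoc measure_Int_set_pmf)
  also have "\<dots> = (\<Sum>A\<in>X \<inter> Pow K. wt x K A)"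
    using assms by (subst measure_measure_pmf_finite) (auto simp: pmf_pJ)
  finally show ?thesis .
qed

lemma pJ_step:
  assumes "cm x" "finite L" "e \<notin> L"
  shows "map_pmf (\<lambda>A. A \<inter> L) (pJ x (insert e L)) = pJ x L"
proof (rule pmf_eqI)
  fix A
  have fin: "finite (insert e L)" using assms by simp
  have "pmf (map_pmf (\<lambda>A. A \<inter> L) (pJ x (insert e L))) A
      = measure_pmf.prob (pJ x (insert e L)) ((\<lambda>A. A \<inter> L) -` {A})"
    by (simp add: pmf_map)
  also have "\<dots> = (\<Sum>B\<in>(\<lambda>A. A \<inter> L) -` {A} \<inter> Pow (insert e L). wt x (insert e L) B)"
    by (rule prob_pJ_sum[OF assms(1) fin])
  also have "\<dots> = wt x L A"
  proof (cases "A \<subseteq> L")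
    case True
    have eq: "(\<lambda>A. A \<inter> L) -` {A} \<inter> Pow (insert e L) = {A, insert e A}"
      using True assms(3) by auto
    have ne: "A \<noteq> insert e A" using True assms(3) by auto
    have fA: "finite A" using True assms(2) finite_subset by auto
    have cA: "card A \<le> card L" using True assms(2) by (simp add: card_mono)
    have eA: "e \<notin> A" using True assms(3) by auto
    have AeL: "A \<subseteq> insert e L" using True by auto
    show ?thesis
      unfolding eq using ne True fA cA eA assms AeL
      by (simp add: wt_def nabla_Suc Suc_diff_le)
  next
    case False
    have eq: "(\<lambda>A. A \<inter> L) -` {A} \<inter> Pow (insert e L) = {}"
      using False by auto
    show ?thesis unfolding eq using False by (simp add: wt_def)
  qed
  also have "\<dots> = pmf (pJ x L) A" using assms by (simp add: pmf_pJ)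
  finally show "pmf (map_pmf (\<lambda>A. A \<inter> L) (pJ x (insert e L))) A = pmf (pJ x L) A" .
qed

lemma pJ_marg_aux:
  assumes "cm x" "finite E"
  shows "finite J \<Longrightarrow> map_pmf (\<lambda>A. A \<inter> J) (pJ x (J \<union> E)) = pJ x J"
  using assms(2)
proof (induction E rule: finite_induct)
  case empty
  then show ?case
    using set_pJ[OF assms(1)] by (auto intro!: map_pmf_idI)
next
  case (insert e E)
  show ?case
  proof (cases "e \<in> J")
    case True
    then have "J \<union> insert e E = J \<union> E" by auto
    then show ?thesis using insert by simp
  next
    case False
    have "J \<union> insert e E = insert e (J \<union> E)" by auto
    moreover have "e \<notin> J \<union> E" using False insert by auto
    moreover have "(\<lambda>A. A \<inter> J) = (\<lambda>A. A \<inter> J) \<circ> (\<lambda>A. A \<inter> (J \<union> E))" by auto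
    ultimately have "map_pmf (\<lambda>A. A \<inter> J) (pJ x (J \<union> insert e E))
       = map_pmf (\<lambda>A. A \<inter> J) (map_pmf (\<lambda>A. A \<inter> (J \<union> E)) (pJ x (insert e (J \<union> E))))"
      by (simp add: pmf.map_comp)
    also have "\<dots> = map_pmf (\<lambda>A. A \<inter> J) (pJ x (J \<union> E))"
      using pJ_step[OF assms(1), of "J \<union> E" e] insert \<open>e \<notin> J \<union> E\<close> by simp
    finally show ?thesis using insert by simp
  qed
qed

lemma pJ_marg:
  assumes "cm x" "finite K" "J \<subseteq> K"
  shows "map_pmf (\<lambda>A. A \<inter> J) (pJ x K) = pJ x J"
proof -
  have "K = J \<union> (K - J)" using assms by auto
  then show ?thesis using pJ_marg_aux[OF assms(1), of "K - J" J] assms finite_subset by auto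
qed

lemma pJ_avoid:
  assumes "cm x" "finite K" "S \<subseteq> K"
  shows "measure_pmf.prob (pJ x K) {A. A \<inter> S = {}} = x (card S)"
proof -
  have "measure_pmf.prob (pJ x K) {A. A \<inter> S = {}} = measure_pmf.prob (map_pmf (\<lambda>A. A \<inter> S) (pJ x K)) {{}}"
    by (simp add: vimage_def)
  also have "\<dots> = pmf (pJ x S) {}" using pJ_marg[OF assms] by (simp add: measure_pmf_single)
  also have "\<dots> = x (card S)" using assms finite_subset[OF assms(3) assms(2)] by (simp add: pmf_pJ wt_def)
  finally show ?thesis .
qed


definition xx :: "(nat \<Rightarrow> real) \<Rightarrow> nat \<Rightarrow> real" where
  "xx \<beta> k = (if k = 0 then 1 else \<beta> k)"

definition cnt :: "nat list \<Rightarrow> nat \<Rightarrow> nat" where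
  "cnt s j = length (filter (\<lambda>v. j < v) s)"

lemma prod_sorted:
  "sorted s \<Longrightarrow> (\<forall>v\<in>set s. a \<le> v \<and> v \<le> N) \<Longrightarrow> a \<le> N \<Longrightarrow>
   (\<Prod>j\<in>{a..<N}. xx \<beta> (cnt s j)) =
   (\<Prod>k=1..length s. \<beta> k ^ ((a # s) ! (length s - k + 1) - (a # s) ! (length s - k)))"
proof (induction s arbitrary: a)
  case Nil
  then show ?case by (simp add: cnt_def xx_def)
next
  case (Cons b s)
  have ab: "a \<le> b" "b \<le> N" using Cons.prems by auto
  have sb: "\<forall>v\<in>set s. b \<le> v \<and> v \<le> N" using Cons.prems by auto
  have IH: "(\<Prod>j\<in>{b..<N}. xx \<beta> (cnt s j)) =
   (\<Prod>k=1..length s. \<beta> k ^ ((b # s) ! (length s - k + 1) - (b # s) ! (length s - k)))"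
    using Cons.IH[of b] Cons.prems sb ab by simp
  define L where "L = Suc (length s)"
  have c1: "cnt (b # s) j = L" if "j < b" for j
  proof -
    have "filter (\<lambda>v. j < v) s = s" using sb that by (auto intro!: filter_True)
    then show ?thesis using that by (simp add: cnt_def L_def)
  qed
  have c2: "cnt (b # s) j = cnt s j" if "b \<le> j" for j
    using that by (simp add: cnt_def)
  have split: "{a..<N} = {a..<b} \<union> {b..<N}" "{a..<b} \<inter> {b..<N} = {}" using ab by auto
  have "(\<Prod>j\<in>{a..<N}. xx \<beta> (cnt (b # s) j))
      = (\<Prod>j\<in>{a..<b}. xx \<beta> (cnt (b # s) j)) * (\<Prod>j\<in>{b..<N}. xx \<beta> (cnt (b # s) j))"
    by (subst split(1), rule prod.union_disjoint) (use split in auto)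
  also have "(\<Prod>j\<in>{a..<b}. xx \<beta> (cnt (b # s) j)) = \<beta> L ^ (b - a)"
    using c1 by (simp add: xx_def L_def)
  also have "(\<Prod>j\<in>{b..<N}. xx \<beta> (cnt (b # s) j)) = (\<Prod>j\<in>{b..<N}. xx \<beta> (cnt s j))"
    using c2 by simp
  also note IH
  also have "\<beta> L ^ (b - a) * (\<Prod>k=1..length s. \<beta> k ^ ((b # s) ! (length s - k + 1) - (b # s) ! (length s - k)))
     = (\<Prod>k=1..length (b # s). \<beta> k ^ ((a # b # s) ! (length (b # s) - k + 1) - (a # b # s) ! (length (b # s) - k)))"
  proof -
    have "(\<Prod>k=1..length (b # s). \<beta> k ^ ((a # b # s) ! (length (b # s) - k + 1) - (a # b # s) ! (length (b # s) - k)))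
       = (\<Prod>k=1..length s. \<beta> k ^ ((a # b # s) ! (length (b # s) - k + 1) - (a # b # s) ! (length (b # s) - k)))
         * \<beta> L ^ (b - a)"
      by (simp add: L_def prod.cl_ivl_Suc)
    also have "(\<Prod>k=1..length s. \<beta> k ^ ((a # b # s) ! (length (b # s) - k + 1) - (a # b # s) ! (length (b # s) - k)))
       = (\<Prod>k=1..length s. \<beta> k ^ ((b # s) ! (length s - k + 1) - (b # s) ! (length s - k)))"
    proof (intro prod.cong refl)
      fix k assume "k \<in> {1..length s}"
      then have k: "1 \<le> k" "k \<le> length s" by auto
      have e1: "length (b # s) - k + 1 = Suc (length s - k + 1)" using k by simp
      have e2: "length (b # s) - k = Suc (length s - k)" using k by simp
      show "\<beta> k ^ ((a # b # s) ! (length (b # s) - k + 1) - (a # b # s) ! (length (b # s) - k)) =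
            \<beta> k ^ ((b # s) ! (length s - k + 1) - (b # s) ! (length s - k))"
        unfolding e1 e2 by simp
    qed
    finally show ?thesis by (simp add: L_def mult.commute)
  qed
  finally show ?case .
qed

lemma Fbar_prod:
  assumes "length n = d" "\<forall>v\<in>set n. v \<le> N"
  shows "Fbar \<beta> d n = (\<Prod>j<N. xx \<beta> (cnt n j))"
proof -
  have s: "sorted (sort n)" "\<forall>v\<in>set (sort n). 0 \<le> v \<and> v \<le> N" "length (sort n) = d"
    using assms by auto
  have cn: "cnt (sort n) j = cnt n j" for j
    by (simp add: cnt_def filter_sort)
  have "(\<Prod>j\<in>{0..<N}. xx \<beta> (cnt (sort n) j)) =
   (\<Prod>k=1..d. \<beta> k ^ ((0 # sort n) ! (d - k + 1) - (0 # sort n) ! (d - k)))"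
    using prod_sorted[OF s(1) s(2), of \<beta>] s(3) by simp
  then show ?thesis
    by (simp add: Fbar_def ordstat_def cn atLeast0LessThan)
qed


lemma emeasure_stream_prefix:
  fixes q :: "'a pmf"
  shows "emeasure (stream_space (measure_pmf q)) {\<omega>\<in>space (stream_space (measure_pmf q)). \<forall>j<N. \<omega> !! j \<in> A j}
       = (\<Prod>j<N. emeasure (measure_pmf q) (A j))"
proof (induction N arbitrary: A)
  case 0
  interpret S: prob_space "stream_space (measure_pmf q)"
    by (rule prob_space.prob_space_stream_space[OF prob_space_measure_pmf])
  show ?case by (simp add: S.emeasure_space_1)
next
  case (Suc N)
  let ?S = "stream_space (measure_pmf q)"
  have meas: "{\<omega>\<in>space ?S. \<forall>j<Suc N. \<omega> !! j \<in> A j} \<in> sets ?S"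
  proof -
    have sp: "space ?S = UNIV" by (simp add: space_stream_space)
    have e: "{\<omega>\<in>space ?S. \<forall>j<Suc N. \<omega> !! j \<in> A j} = (\<Inter>j\<in>{..<Suc N}. (\<lambda>\<omega>. \<omega> !! j) -` A j)"
      using sp by auto
    have "(\<lambda>\<omega>. \<omega> !! j) -` A j \<inter> space ?S \<in> sets ?S" for j
      by (rule measurable_sets[OF measurable_snth]) simp
    then have "(\<lambda>\<omega>. \<omega> !! j) -` A j \<in> sets ?S" for j unfolding sp by simp
    then show ?thesis unfolding e by (intro sets.finite_INT) auto
  qed
  have eq: "{x\<in>space ?S. t ## x \<in> {\<omega>\<in>space ?S. \<forall>j<Suc N. \<omega> !! j \<in> A j}}
     = (if t \<in> A 0 then {\<omega>\<in>space ?S. \<forall>j<N. \<omega> !! j \<in> A (Suc j)} else {})" for t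
    by (auto simp: space_stream_space less_Suc_eq_0_disj)
  have "emeasure ?S {\<omega>\<in>space ?S. \<forall>j<Suc N. \<omega> !! j \<in> A j}
      = (\<integral>\<^sup>+t. emeasure ?S {x\<in>space ?S. t ## x \<in> {\<omega>\<in>space ?S. \<forall>j<Suc N. \<omega> !! j \<in> A j}} \<partial>measure_pmf q)"
    by (rule prob_space.emeasure_stream_space[OF prob_space_measure_pmf meas])
  also have "\<dots> = (\<integral>\<^sup>+t. emeasure ?S {\<omega>\<in>space ?S. \<forall>j<N. \<omega> !! j \<in> A (Suc j)} * indicator (A 0) t \<partial>measure_pmf q)"
    unfolding eq by (intro nn_integral_cong) (auto split: split_indicator)
  also have "\<dots> = emeasure ?S {\<omega>\<in>space ?S. \<forall>j<N. \<omega> !! j \<in> A (Suc j)} * emeasure (measure_pmf q) (A 0)"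
    by (rule nn_integral_cmult_indicator) simp
  also have "\<dots> = (\<Prod>j<Suc N. emeasure (measure_pmf q) (A j))"
    unfolding prod.lessThan_Suc_shift using Suc.IH[of "\<lambda>j. A (Suc j)"] by (simp add: mult.commute)
  finally show ?case .
qed

lemma distr_smap_stream_space:
  assumes M: "prob_space M" and g[measurable]: "g \<in> measurable M N"
  shows "distr (stream_space M) (stream_space N) (smap g) = stream_space (distr M N g)"
proof -
  interpret M: prob_space M by (rule M)
  interpret MD: prob_space "distr M N g" by (rule M.prob_space_distr[OF g])
  interpret PM: product_prob_space "\<lambda>_. M" UNIV ..
  interpret PD: product_prob_space "\<lambda>_. distr M N g" UNIV ..
  have sD: "sets (distr M N g) = sets N" by simp
  have mG: "(\<lambda>X i. g (X i)) \<in> measurable (PiM (UNIV :: nat set) (\<lambda>_. M)) (PiM UNIV (\<lambda>_. N))"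
  proof (rule measurable_PiM_single')
    fix i :: nat assume "i \<in> UNIV"
    show "(\<lambda>X. g (X i)) \<in> measurable (PiM (UNIV :: nat set) (\<lambda>_. M)) N"
      by (rule measurable_compose[OF measurable_component_singleton[of i UNIV "\<lambda>_. M"] g]) simp
  next
    show "(\<lambda>X i. g (X i)) \<in> space (PiM (UNIV :: nat set) (\<lambda>_. M)) \<rightarrow> (\<Pi>\<^sub>E i\<in>UNIV. space N)"
      using measurable_space[OF g] by (auto simp: space_PiM)
  qed
  have Pi_eq: "distr (PiM (UNIV :: nat set) (\<lambda>_. M)) (PiM UNIV (\<lambda>_. N)) (\<lambda>X i. g (X i)) = PiM UNIV (\<lambda>_. distr M N g)"
  proof (rule PD.PiM_eq)
    show "sets (distr (PiM UNIV (\<lambda>_. M)) (PiM UNIV (\<lambda>_. N)) (\<lambda>X i. g (X i))) = sets (PiM UNIV (\<lambda>_. distr M N g))"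
      by (simp add: sets_PiM_cong[OF refl sD])
  next
    fix J F assume J: "finite J" "J \<subseteq> (UNIV :: nat set)" and F: "\<And>j. j \<in> J \<Longrightarrow> F j \<in> sets (distr M N g)"
    have Fs: "F j \<in> sets N" if "j \<in> J" for j using F[OF that] by simp
    have "prod_emb UNIV (\<lambda>_. distr M N g) J (Pi\<^sub>E J F) \<in> sets (PiM UNIV (\<lambda>_. N))"
      unfolding sets_PiM_cong[OF refl sD, symmetric]
      by (rule measurable_prod_emb) (use J F in \<open>auto intro!: sets_PiM_I_finite\<close>)
    then have "emeasure (distr (PiM UNIV (\<lambda>_. M)) (PiM UNIV (\<lambda>_. N)) (\<lambda>X i. g (X i))) (prod_emb UNIV (\<lambda>_. distr M N g) J (Pi\<^sub>E J F))
      = emeasure (PiM UNIV (\<lambda>_. M)) ((\<lambda>X i. g (X i)) -` prod_emb UNIV (\<lambda>_. distr M N g) J (Pi\<^sub>E J F) \<inter> space (PiM UNIV (\<lambda>_. M)))"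
      by (rule emeasure_distr[OF mG])
    also have "(\<lambda>X i. g (X i)) -` prod_emb UNIV (\<lambda>_. distr M N g) J (Pi\<^sub>E J F) \<inter> space (PiM UNIV (\<lambda>_. M))
       = prod_emb UNIV (\<lambda>_. M) J (Pi\<^sub>E J (\<lambda>j. g -` F j \<inter> space M))"
      using measurable_space[OF g]
      by (auto simp: prod_emb_def space_PiM PiE_iff)
    also have "emeasure (PiM UNIV (\<lambda>_. M)) \<dots> = (\<Prod>j\<in>J. emeasure M (g -` F j \<inter> space M))"
      by (rule emeasure_PiM_emb) (use J Fs M in auto)
    also have "\<dots> = (\<Prod>j\<in>J. emeasure (distr M N g) (F j))"
      by (intro prod.cong refl) (simp add: emeasure_distr Fs)
    finally show "emeasure (distr (PiM UNIV (\<lambda>_. M)) (PiM UNIV (\<lambda>_. N)) (\<lambda>X i. g (X i))) (prod_emb UNIV (\<lambda>_. distr M N g) J (Pi\<^sub>E J F))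
      = (\<Prod>j\<in>J. emeasure (distr M N g) (F j))" .
  qed
  have "distr (stream_space M) (stream_space N) (smap g)
      = distr (distr (PiM UNIV (\<lambda>_. M)) (stream_space M) to_stream) (stream_space N) (smap g)"
    by (subst stream_space_eq_distr) simp
  also have "\<dots> = distr (PiM UNIV (\<lambda>_. M)) (stream_space N) (smap g \<circ> to_stream)"
    by (rule distr_distr) measurable
  also have "\<dots> = distr (PiM UNIV (\<lambda>_. M)) (stream_space N) (to_stream \<circ> (\<lambda>X i. g (X i)))"
    by (intro distr_cong refl) (simp add: to_stream_def stream.map_comp comp_def)
  also have "\<dots> = distr (distr (PiM UNIV (\<lambda>_. M)) (PiM UNIV (\<lambda>_. N)) (\<lambda>X i. g (X i))) (stream_space N) to_stream"
    by (rule distr_distr[symmetric]) (measurable, rule mG)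
  also have "\<dots> = distr (PiM UNIV (\<lambda>_. distr M N g)) (stream_space (distr M N g)) to_stream"
    unfolding Pi_eq by (intro distr_cong refl sets_stream_space_cong sD[symmetric])
  also have "\<dots> = stream_space (distr M N g)"
    by (rule stream_space_eq_distr[symmetric])
  finally show ?thesis .
qed


definition emb01 :: "nat set \<Rightarrow> nat set \<Rightarrow> nat \<Rightarrow> real" where
  "emb01 J A = restrict (\<lambda>i. if i \<in> A then 1 else 0) J"

definition Pf :: "(nat \<Rightarrow> real) \<Rightarrow> nat set \<Rightarrow> (nat \<Rightarrow> real) measure" where
  "Pf x J = distr (measure_pmf (pJ x J)) (PiM J (\<lambda>_. borel)) (emb01 J)"

lemma emb01_meas: "emb01 J \<in> measurable (measure_pmf p) (PiM J (\<lambda>_. borel))"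
  by (auto simp: emb01_def space_PiM)

lemma Pf_proj:
  assumes "cm x"
  shows "polish_projective UNIV (Pf x)"
  unfolding polish_projective_def projective_family_def
proof (intro conjI allI impI)
  fix J H :: "nat set" assume JH: "J \<subseteq> H" "finite H" "H \<subseteq> UNIV"
  have "distr (Pf x H) (PiM J (\<lambda>_. borel)) (\<lambda>f. restrict f J)
     = distr (measure_pmf (pJ x H)) (PiM J (\<lambda>_. borel)) ((\<lambda>f. restrict f J) \<circ> emb01 H)"
    unfolding Pf_def
    by (rule distr_distr) (auto intro: measurable_restrict_subset[OF JH(1)] simp: emb01_def space_PiM)
  also have "(\<lambda>f. restrict f J) \<circ> emb01 H = emb01 J \<circ> (\<lambda>A. A \<inter> J)"
    using JH by (auto simp: emb01_def fun_eq_iff restrict_def)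
  also have "distr (measure_pmf (pJ x H)) (PiM J (\<lambda>_. borel)) (emb01 J \<circ> (\<lambda>A. A \<inter> J))
     = distr (distr (measure_pmf (pJ x H)) (count_space UNIV) (\<lambda>A. A \<inter> J)) (PiM J (\<lambda>_. borel)) (emb01 J)"
    by (rule distr_distr[symmetric]) (auto simp: emb01_def space_PiM)
  also have "distr (measure_pmf (pJ x H)) (count_space UNIV) (\<lambda>A. A \<inter> J) = measure_pmf (pJ x J)"
    using pJ_marg[OF assms JH(2,1)] by (simp add: map_pmf_rep_eq[symmetric])
  finally have eq: "distr (Pf x H) (PiM J (\<lambda>_. borel)) (\<lambda>f. restrict f J) = distr (measure_pmf (pJ x J)) (PiM J (\<lambda>_. borel)) (emb01 J)" .
  show "Pf x J = distr (Pf x H) (PiM J (\<lambda>_. borel)) (\<lambda>f. restrict f J)"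
    by (simp only: Pf_def[of x J] eq)
next
  fix J :: "nat set" assume "finite J" "J \<subseteq> UNIV"
  show "prob_space (Pf x J)"
    unfolding Pf_def by (rule measure_pmf.prob_space_distr[OF emb01_meas])
qed

definition Qm :: "(nat \<Rightarrow> real) \<Rightarrow> (nat \<Rightarrow> real) measure" where
  "Qm x = projective_family.lim UNIV (Pf x) (\<lambda>_. borel)"

definition gD :: "nat set \<Rightarrow> (nat \<Rightarrow> real) \<Rightarrow> nat set" where
  "gD D f = {k\<in>D. f k = 1}"

lemma Qm_prob: "cm x \<Longrightarrow> prob_space (Qm x)"
proof -
  assume "cm x"
  interpret polish_projective UNIV "Pf x" by (rule Pf_proj) fact
  show ?thesis unfolding Qm_def by (rule P.prob_space_axioms)
qed

lemma Qm_g: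
  assumes x: "cm x" and D: "finite D"
  shows "gD D \<in> measurable (Qm x) (count_space UNIV)"
    and "distr (Qm x) (count_space UNIV) (gD D) = measure_pmf (pJ x D)"
proof -
  interpret polish_projective UNIV "Pf x" by (rule Pf_proj) fact
  define X where "X S = {h \<in> space (PiM D (\<lambda>_. borel :: real measure)). {k\<in>D. h k = 1} \<in> S}" for S
  have Xeq: "X S = (\<Union>B\<in>S \<inter> Pow D. Pi\<^sub>E D (\<lambda>k. if k \<in> B then {1::real} else - {1}))" for S
  proof (intro equalityI subsetI)
    fix h :: "nat \<Rightarrow> real" assume h: "h \<in> X S"
    define B where "B = {k\<in>D. h k = 1}"
    have "B \<in> S \<inter> Pow D" using h by (auto simp: X_def B_def)
    moreover have "h \<in> Pi\<^sub>E D (\<lambda>k. if k \<in> B then {1::real} else - {1})"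
      using h by (auto simp: X_def B_def space_PiM PiE_iff)
    ultimately show "h \<in> (\<Union>B\<in>S \<inter> Pow D. Pi\<^sub>E D (\<lambda>k. if k \<in> B then {1::real} else - {1}))" by blast
  next
    fix h :: "nat \<Rightarrow> real" assume "h \<in> (\<Union>B\<in>S \<inter> Pow D. Pi\<^sub>E D (\<lambda>k. if k \<in> B then {1::real} else - {1}))"
    then obtain B where B: "B \<in> S" "B \<subseteq> D" "h \<in> Pi\<^sub>E D (\<lambda>k. if k \<in> B then {1::real} else - {1})" by auto
    have "{k\<in>D. h k = 1} = B" using B by (auto simp: PiE_iff split: if_splits)
    then show "h \<in> X S" using B by (auto simp: X_def space_PiM PiE_iff)
  qed
  have Xs: "X S \<in> sets (PiM D (\<lambda>_. borel))" for S
    unfolding Xeq using D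
    by (intro sets.finite_UN) (auto intro!: sets_PiM_I_finite)
  have r: "{k\<in>D. restrict f D k = 1} = gD D f" for f :: "nat \<Rightarrow> real" by (auto simp: gD_def)
  have sQ: "space (Qm x) = space (PiM UNIV (\<lambda>_. borel :: real measure))" by (simp add: Qm_def)
  have pre: "gD D -` S \<inter> space (Qm x) = prod_emb UNIV (\<lambda>_. borel) D (X S)" for S
    unfolding sQ prod_emb_def X_def by (auto simp: r space_PiM simp del: restrict_apply)
  have pre_s: "gD D -` S \<inter> space (Qm x) \<in> sets (Qm x)" for S
  proof -
    have "prod_emb UNIV (\<lambda>_. borel) D (X S) \<in> sets (PiM UNIV (\<lambda>_. borel :: real measure))"
      by (rule measurable_prod_emb) (use Xs in auto)
    then show ?thesis unfolding pre by (simp add: Qm_def)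
  qed
  show meas: "gD D \<in> measurable (Qm x) (count_space UNIV)"
    by (rule measurableI) (use pre_s in auto)
  show "distr (Qm x) (count_space UNIV) (gD D) = measure_pmf (pJ x D)"
  proof (rule measure_eqI)
    fix S assume "S \<in> sets (distr (Qm x) (count_space UNIV) (gD D))"
    have "emeasure (distr (Qm x) (count_space UNIV) (gD D)) S = emeasure (Qm x) (gD D -` S \<inter> space (Qm x))"
      by (rule emeasure_distr[OF meas]) simp
    also have "\<dots> = emeasure (Pf x D) (X S)"
      apply (subst pre) apply (unfold Qm_def) by (rule emeasure_lim_emb) (use D Xs in auto)
    also have "\<dots> = emeasure (measure_pmf (pJ x D)) (emb01 D -` X S \<inter> space (measure_pmf (pJ x D)))"
      unfolding Pf_def by (rule emeasure_distr[OF emb01_meas Xs])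
    also have "emb01 D -` X S \<inter> space (measure_pmf (pJ x D)) = {A. A \<inter> D \<in> S}"
    proof -
      have "{k \<in> D. emb01 D A k = 1} = A \<inter> D" for A by (auto simp: emb01_def)
      then show ?thesis by (auto simp: X_def emb01_def space_PiM)
    qed
    also have "emeasure (measure_pmf (pJ x D)) {A. A \<inter> D \<in> S} = emeasure (measure_pmf (pJ x D)) S"
    proof (rule emeasure_eq_AE)
      show "AE A in measure_pmf (pJ x D). (A \<in> {A. A \<inter> D \<in> S}) = (A \<in> S)"
      proof (intro AE_pmfI)
        fix y assume "y \<in> set_pmf (pJ x D)"
        then have "y \<inter> D = y" using set_pJ[OF x D] by auto
        then show "(y \<in> {A. A \<inter> D \<in> S}) = (y \<in> S)" by simp
      qed
    qed auto
    finally show "emeasure (distr (Qm x) (count_space UNIV) (gD D)) S = emeasure (measure_pmf (pJ x D)) S" .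
  qed simp
qed

lemma sets_Qm: "cm x \<Longrightarrow> sets (Qm x) = sets (PiM UNIV (\<lambda>_. borel :: real measure))"
proof -
  assume "cm x"
  interpret polish_projective UNIV "Pf x" by (rule Pf_proj) fact
  show ?thesis unfolding Qm_def by (rule sets_lim)
qed


lemma incl_excl:
  fixes p :: "'a pmf" and A :: "nat \<Rightarrow> 'a set"
  assumes "finite J"
  shows "measure_pmf.prob p {t. (\<forall>i\<in>K. t \<in> A i) \<and> (\<forall>i\<in>J. t \<notin> A i)}
       = (\<Sum>S\<in>Pow J. (-1) ^ card S * measure_pmf.prob p {t. \<forall>i\<in>K \<union> S. t \<in> A i})"
  using assms
proof (induction J arbitrary: K rule: finite_induct)
  case empty
  then show ?case by simp
next
  case (insert j J)
  have eq: "{t. (\<forall>i\<in>K. t \<in> A i) \<and> (\<forall>i\<in>insert j J. t \<notin> A i)}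
     = {t. (\<forall>i\<in>K. t \<in> A i) \<and> (\<forall>i\<in>J. t \<notin> A i)} - {t. (\<forall>i\<in>insert j K. t \<in> A i) \<and> (\<forall>i\<in>J. t \<notin> A i)}"
    by auto
  have "measure_pmf.prob p {t. (\<forall>i\<in>K. t \<in> A i) \<and> (\<forall>i\<in>insert j J. t \<notin> A i)}
     = measure_pmf.prob p {t. (\<forall>i\<in>K. t \<in> A i) \<and> (\<forall>i\<in>J. t \<notin> A i)}
       - measure_pmf.prob p {t. (\<forall>i\<in>insert j K. t \<in> A i) \<and> (\<forall>i\<in>J. t \<notin> A i)}"
    unfolding eq by (rule measure_pmf.finite_measure_Diff) auto
  also have "\<dots> = (\<Sum>S\<in>Pow J. (-1) ^ card S * measure_pmf.prob p {t. \<forall>i\<in>K \<union> S. t \<in> A i})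
     - (\<Sum>S\<in>Pow J. (-1) ^ card S * measure_pmf.prob p {t. \<forall>i\<in>insert j K \<union> S. t \<in> A i})"
    by (simp only: insert.IH)
  also have "\<dots> = (\<Sum>S\<in>Pow (insert j J). (-1) ^ card S * measure_pmf.prob p {t. \<forall>i\<in>K \<union> S. t \<in> A i})"
  proof -
    have disj: "Pow J \<inter> insert j ` Pow J = {}" using insert by auto
    have inj: "inj_on (insert j) (Pow J)" using insert
      by (smt (verit, ccfv_SIG) PowD inj_onI insert_ident subset_iff)
    have "(\<Sum>S\<in>insert j ` Pow J. (-1) ^ card S * measure_pmf.prob p {t. \<forall>i\<in>K \<union> S. t \<in> A i})
        = - (\<Sum>S\<in>Pow J. (-1) ^ card S * measure_pmf.prob p {t. \<forall>i\<in>insert j K \<union> S. t \<in> A i})"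
    proof (subst sum.reindex[OF inj], unfold comp_def, subst sum_negf[symmetric], intro sum.cong refl)
      fix S assume "S \<in> Pow J"
      then have "j \<notin> S" "finite S" using insert finite_subset by auto
      then show "(-1) ^ card (insert j S) * measure_pmf.prob p {t. \<forall>i\<in>K \<union> insert j S. t \<in> A i}
         = - ((-1) ^ card S * measure_pmf.prob p {t. \<forall>i\<in>insert j K \<union> S. t \<in> A i})"
        by simp
    qed
    then show ?thesis
      unfolding Pow_insert using disj insert by (simp add: sum.union_disjoint)
  qed
  finally show ?case .
qed

lemma sum_Pow_card:
  assumes "finite J"
  shows "(\<Sum>S\<in>Pow J. g (card S)) = (\<Sum>i=0..card J. of_nat (card J choose i) * (g i :: real))"
proof -
  have "(\<Sum>S\<in>Pow J. g (card S)) = (\<Sum>i\<in>{0..card J}. \<Sum>S\<in>{S\<in>Pow J. card S = i}. g (card S))"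
    by (rule sum.group[symmetric]) (use assms in \<open>auto simp: card_mono\<close>)
  also have "\<dots> = (\<Sum>i=0..card J. of_nat (card J choose i) * g i)"
  proof (intro sum.cong refl)
    fix i
    have "{S\<in>Pow J. card S = i} = {B. B \<subseteq> J \<and> card B = i}" by auto
    then show "(\<Sum>S\<in>{S\<in>Pow J. card S = i}. g (card S)) = of_nat (card J choose i) * g i"
      using n_subsets[OF assms, of i] by simp
  qed
  finally show ?thesis .
qed

definition ind01 :: "nat \<Rightarrow> nat set \<Rightarrow> nat list" where
  "ind01 d T = map (\<lambda>i. if i \<in> T then 1 else 0) [0..<d]"

lemma Fbar_ind01:
  assumes "T \<subseteq> {0..<d}"
  shows "Fbar \<beta> d (ind01 d T) = xx \<beta> (card T)"
proof -
  have "Fbar \<beta> d (ind01 d T) = (\<Prod>j<1. xx \<beta> (cnt (ind01 d T) j))"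
    by (rule Fbar_prod) (auto simp: ind01_def)
  moreover have "cnt (ind01 d T) 0 = card T"
  proof -
    have "{i. i < d \<and> 0 < map (\<lambda>i. if i \<in> T then 1 else (0::nat)) [0..<d] ! i} = T"
      using assms by (auto split: if_splits)
    then show ?thesis by (simp add: cnt_def ind01_def length_filter_conv_card)
  qed
  ultimately show ?thesis by simp
qed


lemma necessity:
  assumes H: "\<forall>d\<ge>2. is_discrete_survival d (Fbar \<beta> d)"
  shows "(\<lambda>k. if k = 0 then 1 else \<beta> k) \<in> M_infty"
proof -
  have xxe: "(\<lambda>k. if k = 0 then 1 else \<beta> k) = xx \<beta>" by (simp add: xx_def fun_eq_iff)
  have nn: "nabla (xx \<beta>) j k \<ge> 0" for j k
  proof -
    define d where "d = max 2 (k + j)"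
    obtain p where p: "has_survival d p (Fbar \<beta> d)"
      using H unfolding is_discrete_survival_def d_def by fastforce
    have supp: "\<And>t. t \<in> set_pmf p \<Longrightarrow> length t = d \<and> (\<forall>i<d. 0 < t ! i)"
      using p unfolding has_survival_def is_law_on_def by auto
    define A where "A = (\<lambda>i. {t::nat list. 1 < t ! i})"
    have surv: "measure_pmf.prob p {t. \<forall>i\<in>T. t \<in> A i} = xx \<beta> (card T)" if T: "T \<subseteq> {0..<d}" for T
    proof -
      have "survival_pmf p (ind01 d T) = Fbar \<beta> d (ind01 d T)"
        using p unfolding has_survival_def by (simp add: ind01_def)
      also have "\<dots> = xx \<beta> (card T)" by (rule Fbar_ind01[OF T])
      finally have 1: "survival_pmf p (ind01 d T) = xx \<beta> (card T)" .
      have li: "length (ind01 d T) = d" by (simp add: ind01_def)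
      have ni: "ind01 d T ! i = (if i \<in> T then 1 else 0)" if "i < d" for i
        using that by (simp add: ind01_def)
      have "(\<forall>i<length (ind01 d T). ind01 d T ! i < t ! i) \<longleftrightarrow> (\<forall>i\<in>T. t \<in> A i)"
        if "t \<in> set_pmf p" for t
      proof
        assume a: "\<forall>i<length (ind01 d T). ind01 d T ! i < t ! i"
        show "\<forall>i\<in>T. t \<in> A i"
        proof
          fix i assume "i \<in> T"
          then have "i < d" using T by auto
          then show "t \<in> A i" using a li ni[of i] \<open>i \<in> T\<close> by (auto simp: A_def)
        qed
      next
        assume a: "\<forall>i\<in>T. t \<in> A i"
        show "\<forall>i<length (ind01 d T). ind01 d T ! i < t ! i"
        proof (intro allI impI)
          fix i assume "i < length (ind01 d T)"
          then have i: "i < d" using li by simp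
          show "ind01 d T ! i < t ! i"
          proof (cases "i \<in> T")
            case True
            then show ?thesis using a ni[OF i] by (auto simp: A_def)
          next
            case False
            then show ?thesis using supp[OF that] ni[OF i] i by auto
          qed
        qed
      qed
      then have eq: "{t. \<forall>i<length (ind01 d T). ind01 d T ! i < t ! i} \<inter> set_pmf p
          = {t. \<forall>i\<in>T. t \<in> A i} \<inter> set_pmf p"
        by blast
      have "survival_pmf p (ind01 d T) = measure_pmf.prob p ({t. \<forall>i<length (ind01 d T). ind01 d T ! i < t ! i} \<inter> set_pmf p)"
        unfolding survival_pmf_def by (rule measure_Int_set_pmf[symmetric])
      also have "\<dots> = measure_pmf.prob p ({t. \<forall>i\<in>T. t \<in> A i} \<inter> set_pmf p)"
        by (simp only: eq)
      also have "\<dots> = measure_pmf.prob p {t. \<forall>i\<in>T. t \<in> A i}"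
        by (rule measure_Int_set_pmf)
      finally have "survival_pmf p (ind01 d T) = measure_pmf.prob p {t. \<forall>i\<in>T. t \<in> A i}" .
      then show ?thesis using 1 by simp
    qed
    define K where "K = {0..<k}"
    define J where "J = {k..<k+j}"
    have "0 \<le> measure_pmf.prob p {t. (\<forall>i\<in>K. t \<in> A i) \<and> (\<forall>i\<in>J. t \<notin> A i)}" by simp
    also have "\<dots> = (\<Sum>S\<in>Pow J. (-1) ^ card S * measure_pmf.prob p {t. \<forall>i\<in>K \<union> S. t \<in> A i})"
      by (rule incl_excl) (simp add: J_def)
    also have "\<dots> = (\<Sum>S\<in>Pow J. (-1) ^ card S * xx \<beta> (k + card S))"
    proof (intro sum.cong refl)
      fix S assume S: "S \<in> Pow J"
      have "K \<union> S \<subseteq> {0..<d}" using S by (force simp: K_def J_def d_def)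
      moreover have "card (K \<union> S) = k + card S"
        using S by (subst card_Un_disjoint) (auto simp: K_def J_def intro: finite_subset)
      ultimately show "(-1) ^ card S * measure_pmf.prob p {t. \<forall>i\<in>K \<union> S. t \<in> A i} = (-1) ^ card S * xx \<beta> (k + card S)"
        by (simp add: surv)
    qed
    also have "\<dots> = (\<Sum>i=0..card J. of_nat (card J choose i) * ((-1) ^ i * xx \<beta> (k + i)))"
      by (rule sum_Pow_card) (simp add: J_def)
    also have "\<dots> = nabla (xx \<beta>) j k"
      unfolding nabla_def J_def by (intro sum.cong) (auto simp: mult_ac)
    finally show ?thesis .
  qed
  have b1: "\<beta> 1 < 1"
  proof (rule ccontr)
    assume "\<not> \<beta> 1 < 1"
    then have b: "\<beta> 1 \<ge> 1" by simp
    obtain p where p: "has_survival 2 p (Fbar \<beta> 2)"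
      using H unfolding is_discrete_survival_def by fastforce
    have "AE t in measure_pmf p. m < t ! 0" for m
    proof -
      have "survival_pmf p [m, 0] = Fbar \<beta> 2 [m, 0]"
        using p unfolding has_survival_def by simp
      also have "Fbar \<beta> 2 [m, 0] = (\<Prod>j<m. xx \<beta> (cnt [m, 0] j))"
        by (rule Fbar_prod) auto
      also have "\<dots> = (\<Prod>j<m. \<beta> 1)"
        by (intro prod.cong refl) (auto simp: cnt_def xx_def)
      finally have s: "survival_pmf p [m, 0] = \<beta> 1 ^ m" by simp
      have "1 \<le> \<beta> 1 ^ m" using b by (simp add: one_le_power)
      also have "\<dots> = survival_pmf p [m, 0]" using s by simp
      also have "survival_pmf p [m, 0] \<le> measure_pmf.prob p {t. m < t ! 0}"
        unfolding survival_pmf_def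
        by (rule measure_pmf.finite_measure_mono) (auto simp: less_Suc_eq)
      finally have "measure_pmf.prob p {t. m < t ! 0} = 1"
        using s measure_pmf.prob_le_1 by (metis antisym)
      then show ?thesis using measure_pmf.AE_prob_1 by force
    qed
    then have "AE t in measure_pmf p. \<forall>m. m < t ! 0" by (simp add: AE_all_countable)
    then have "AE t in measure_pmf p. False" by (rule AE_mp) auto
    then show False by simp
  qed
  show ?thesis unfolding xxe M_infty_def using nn b1 by (simp add: xx_def)
qed


lemma map_upt_eq: "(map f [0..<m] = l) = (length l = m \<and> (\<forall>k<m. f k = l ! k))"
  by (auto simp: list_eq_iff_nth_eq)

lemma meas_map_list:
  fixes F :: "nat \<Rightarrow> 'a \<Rightarrow> nat"
  assumes F[measurable]: "\<And>k. F k \<in> measurable M (count_space UNIV)"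
  shows "(\<lambda>\<omega>. map (\<lambda>k. F k \<omega>) [0..<m]) \<in> measurable M (count_space UNIV)"
  unfolding measurable_count_space_eq2_countable
proof (intro conjI ballI)
  show "(\<lambda>\<omega>. map (\<lambda>k. F k \<omega>) [0..<m]) \<in> space M \<rightarrow> UNIV" by simp
next
  fix l :: "nat list"
  have eq: "(\<lambda>\<omega>. map (\<lambda>k. F k \<omega>) [0..<m]) -` {l} \<inter> space M = {\<omega>\<in>space M. length l = m \<and> (\<forall>k<m. F k \<omega> = l ! k)}"
    by (auto simp: map_upt_eq)
  have p: "Measurable.pred M (\<lambda>\<omega>. \<forall>k\<in>{..<m}. F k \<omega> = l ! k)"
    by (rule pred_intros_finite(3)) (auto intro: pred_count_space_const1 F)
  have "Measurable.pred M (\<lambda>\<omega>. length l = m \<and> (\<forall>k<m. F k \<omega> = l ! k))"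
    using p by (cases "length l = m") auto
  then show "(\<lambda>\<omega>. map (\<lambda>k. F k \<omega>) [0..<m]) -` {l} \<inter> space M \<in> sets M"
    unfolding eq by (simp add: pred_def)
qed

lemma meas_wsg: "wsg_times m \<in> measurable (stream_space (count_space UNIV)) (count_space UNIV)"
  unfolding wsg_times_def
proof (rule meas_map_list)
  fix k :: nat
  have "(\<lambda>\<omega>. LEAST i. k \<in> \<omega> !! i) \<in> measurable (stream_space (count_space UNIV)) (count_space UNIV)"
  proof (rule measurable_Least)
    fix i
    show "Measurable.pred (stream_space (count_space UNIV)) (\<lambda>\<omega>. k \<in> \<omega> !! i)"
      using measurable_compose[OF measurable_snth[of i "count_space UNIV"], of "\<lambda>I. k \<in> I" "count_space UNIV"]
      by simp
  qed
  then show "(\<lambda>\<omega>. Suc (LEAST i. k \<in> \<omega> !! i)) \<in> measurable (stream_space (count_space UNIV)) (count_space UNIV)"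
    by measurable
qed

lemma meas_wsg': "wsg_times m \<in> measurable (stream_space (measure_pmf q)) (count_space UNIV)"
proof -
  have ss: "sets (stream_space (measure_pmf q)) = sets (stream_space (count_space UNIV))"
    by (rule sets_stream_space_cong) simp
  show ?thesis by (subst measurable_cong_sets[OF ss refl]) (rule meas_wsg)
qed

definition tauk :: "nat \<Rightarrow> (nat \<Rightarrow> real) stream \<Rightarrow> nat" where
  "tauk k \<omega> = Suc (LEAST i. (\<omega> !! i) k = 1)"

definition Tau :: "(nat \<Rightarrow> real) stream \<Rightarrow> nat stream" where
  "Tau \<omega> = smap (\<lambda>k. tauk k \<omega>) nats"

definition Pm :: "(nat \<Rightarrow> real) \<Rightarrow> nat stream measure" where
  "Pm x = distr (stream_space (Qm x)) (stream_space (count_space UNIV)) Tau"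

definition Wm :: "(nat \<Rightarrow> real) \<Rightarrow> nat \<Rightarrow> nat list measure" where
  "Wm x m = distr (stream_space (measure_pmf (pJ x {0..<m}))) (count_space UNIV) (wsg_times m)"

lemma meas_comp:
  assumes "cm x"
  shows "(\<lambda>\<omega>. (\<omega> !! i) k) \<in> borel_measurable (stream_space (Qm x))"
proof -
  have "(\<lambda>f. f k) \<in> measurable (Qm x) (borel :: real measure)"
    by (subst measurable_cong_sets[OF sets_Qm[OF assms] refl])
       (rule measurable_component_singleton, simp)
  then show ?thesis by (rule measurable_compose[OF measurable_snth])
qed

lemma meas_tauk:
  assumes "cm x"
  shows "tauk k \<in> measurable (stream_space (Qm x)) (count_space UNIV)"
proof -
  note [measurable] = meas_comp[OF assms]
  have "(\<lambda>\<omega>. LEAST i. (\<omega> !! i) k = (1::real)) \<in> measurable (stream_space (Qm x)) (count_space UNIV)"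
    by (rule measurable_Least) measurable
  then show ?thesis unfolding tauk_def by measurable
qed

lemma meas_Tau:
  assumes "cm x"
  shows "Tau \<in> measurable (stream_space (Qm x)) (stream_space (count_space UNIV))"
  by (rule measurable_stream_space2) (simp add: Tau_def meas_tauk[OF assms])

lemma marginal:
  assumes x: "cm x"
  shows "distr (Pm x) (count_space UNIV) (stake m) = Wm x m"
proof -
  define D where "D = {0..<m}"
  have fD: "finite D" by (simp add: D_def)
  note gm = Qm_g[OF x fD]
  have "distr (Pm x) (count_space UNIV) (stake m)
      = distr (stream_space (Qm x)) (count_space UNIV) (stake m \<circ> Tau)"
    unfolding Pm_def by (rule distr_distr[OF measurable_stake meas_Tau[OF x]])
  also have "stake m \<circ> Tau = wsg_times m \<circ> smap (gD D)"
  proof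
    fix \<omega>
    have "stake m (Tau \<omega>) = map (\<lambda>k. tauk k \<omega>) [0..<m]"
      by (simp add: Tau_def list_eq_iff_nth_eq)
    also have "\<dots> = wsg_times m (smap (gD D) \<omega>)"
      unfolding wsg_times_def by (intro map_cong refl) (simp add: tauk_def gD_def D_def)
    finally show "(stake m \<circ> Tau) \<omega> = (wsg_times m \<circ> smap (gD D)) \<omega>" by simp
  qed
  also have "distr (stream_space (Qm x)) (count_space UNIV) (wsg_times m \<circ> smap (gD D))
     = distr (distr (stream_space (Qm x)) (stream_space (count_space UNIV)) (smap (gD D))) (count_space UNIV) (wsg_times m)"
    by (rule distr_distr[OF meas_wsg measurable_smap[OF gm(1)], symmetric])
  also have "distr (stream_space (Qm x)) (stream_space (count_space UNIV)) (smap (gD D)) = stream_space (measure_pmf (pJ x D))"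
    using distr_smap_stream_space[OF Qm_prob[OF x] gm(1)] gm(2) by simp
  finally show ?thesis unfolding Wm_def D_def .
qed


lemma prefix_sets:
  fixes q :: "'a pmf"
  shows "{\<omega>\<in>space (stream_space (measure_pmf q)). \<forall>j<N. \<omega> !! j \<in> A j} \<in> sets (stream_space (measure_pmf q))"
proof -
  let ?S = "stream_space (measure_pmf q)"
  have sp: "space ?S = UNIV" by (simp add: space_stream_space)
  have e: "{\<omega>\<in>space ?S. \<forall>j<N. \<omega> !! j \<in> A j} = space ?S \<inter> (\<Inter>j\<in>{..<N}. (\<lambda>\<omega>. \<omega> !! j) -` A j)"
    using sp by auto
  have "(\<lambda>\<omega>. \<omega> !! j) -` A j \<inter> space ?S \<in> sets ?S" for j
    by (rule measurable_sets[OF measurable_snth]) simp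
  then have *: "(\<lambda>\<omega>. \<omega> !! j) -` A j \<in> sets ?S" for j unfolding sp by simp
  show ?thesis
  proof (cases "N = 0")
    case True
    then show ?thesis by simp
  next
    case False
    then show ?thesis unfolding e using * by (intro sets.Int sets.finite_INT) auto
  qed
qed

lemma measure_stream_prefix:
  fixes q :: "'a pmf"
  shows "measure (stream_space (measure_pmf q)) {\<omega>\<in>space (stream_space (measure_pmf q)). \<forall>j<N. \<omega> !! j \<in> A j}
       = (\<Prod>j<N. measure_pmf.prob q (A j))"
proof -
  have "emeasure (stream_space (measure_pmf q)) {\<omega>\<in>space (stream_space (measure_pmf q)). \<forall>j<N. \<omega> !! j \<in> A j}
      = ennreal (\<Prod>j<N. measure_pmf.prob q (A j))"
    unfolding emeasure_stream_prefix by (simp add: measure_pmf.emeasure_eq_measure prod_ennreal)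
  then have "measure (stream_space (measure_pmf q)) {\<omega>\<in>space (stream_space (measure_pmf q)). \<forall>j<N. \<omega> !! j \<in> A j}
      = enn2real (ennreal (\<Prod>j<N. measure_pmf.prob q (A j)))"
    by (simp add: measure_def)
  also have "\<dots> = (\<Prod>j<N. measure_pmf.prob q (A j))"
    by (rule enn2real_ennreal) (simp add: prod_nonneg)
  finally show ?thesis .
qed

definition pmW :: "(nat \<Rightarrow> real) \<Rightarrow> nat \<Rightarrow> nat list pmf" where
  "pmW x m = Abs_pmf (Wm x m)"

lemma prob_Wm: "prob_space (Wm x m)"
  unfolding Wm_def
  by (rule prob_space.prob_space_distr[OF prob_space.prob_space_stream_space[OF prob_space_measure_pmf] meas_wsg'])

lemma pmW: "measure_pmf (pmW x m) = Wm x m"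
  unfolding pmW_def
proof (rule Abs_pmf_inverse, intro CollectI conjI)
  show "prob_space (Wm x m)" by (rule prob_Wm)
  show sW: "sets (Wm x m) = UNIV" by (simp add: Wm_def)
  interpret prob_space "Wm x m" by (rule prob_Wm)
  show "AE y in Wm x m. Sigma_Algebra.measure (Wm x m) {y} \<noteq> 0"
    by (subst AE_support_countable[OF sW]) (auto intro!: exI[of _ UNIV])
qed

lemma is_wsg_pmW:
  assumes x: "cm x" and x1: "x 1 < 1"
  shows "is_wsg_law m (pmW x m)"
  unfolding is_wsg_law_def
proof (intro exI[of _ "pJ x {0..<m}"] conjI allI impI)
  show "set_pmf (pJ x {0..<m}) \<subseteq> Pow {0..<m}" by (rule set_pJ[OF x]) simp
  fix k assume k: "k < m"
  have "{I. k \<notin> I} = {A. A \<inter> {k} = {}}" by auto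
  then show "measure_pmf.prob (pJ x {0..<m}) {I. k \<notin> I} < 1"
    using pJ_avoid[OF x, of "{0..<m}" "{k}"] k x1 by simp
next
  show "measure_pmf (pmW x m) = distr (stream_space (measure_pmf (pJ x {0..<m}))) (count_space UNIV) (wsg_times m)"
    by (simp add: pmW Wm_def)
qed


lemma pJ_perm:
  assumes x: "cm x" and D: "finite D" and p: "\<pi> permutes D"
  shows "map_pmf (\<lambda>I. {k\<in>D. \<pi> k \<in> I}) (pJ x D) = pJ x D"
proof (rule pmf_eqI)
  fix A
  let ?h = "\<lambda>I. {k\<in>D. \<pi> k \<in> I}"
  have inj: "inj \<pi>" using p by (rule permutes_inj)
  have "pmf (map_pmf ?h (pJ x D)) A = measure_pmf.prob (pJ x D) (?h -` {A})"
    by (simp add: pmf_map)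
  also have "\<dots> = (\<Sum>B\<in>?h -` {A} \<inter> Pow D. wt x D B)"
    by (rule prob_pJ_sum[OF x D])
  also have "\<dots> = wt x D A"
  proof (cases "A \<subseteq> D")
    case True
    have eq: "?h -` {A} \<inter> Pow D = {\<pi> ` A}"
    proof (intro equalityI subsetI)
      fix B assume "B \<in> ?h -` {A} \<inter> Pow D"
      then have B: "B \<subseteq> D" "{k\<in>D. \<pi> k \<in> B} = A" by auto
      have "\<pi> ` A = B"
      proof (intro equalityI subsetI)
        fix y assume "y \<in> \<pi> ` A" then show "y \<in> B" using B by auto
      next
        fix y assume y: "y \<in> B"
        then have yD: "y \<in> D" using B by auto
        obtain k where k: "y = \<pi> k" using permutes_surj[OF p] by (metis surjD)
        then have "k \<in> D" using yD permutes_in_image[OF p] by simp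
        then have "k \<in> A" using B y k by auto
        then show "y \<in> \<pi> ` A" using k by auto
      qed
      then show "B \<in> {\<pi> ` A}" by simp
    next
      fix B assume "B \<in> {\<pi> ` A}"
      then have B: "B = \<pi> ` A" by simp
      have "{k\<in>D. \<pi> k \<in> \<pi> ` A} = A" using True inj by (auto simp: inj_image_mem_iff)
      moreover have "\<pi> ` A \<subseteq> D" using True permutes_in_image[OF p] by auto
      ultimately show "B \<in> ?h -` {A} \<inter> Pow D" using B by auto
    qed
    have "\<pi> ` A \<subseteq> D" using True permutes_in_image[OF p] by auto
    moreover have "card (\<pi> ` A) = card A" using inj by (simp add: card_image inj_on_subset)
    ultimately show ?thesis unfolding eq using True by (simp add: wt_def)
  next
    case False
    have "?h -` {A} \<inter> Pow D = {}" using False by auto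
    then show ?thesis using False by (simp add: wt_def)
  qed
  also have "\<dots> = pmf (pJ x D) A" by (simp add: pmf_pJ[OF x D])
  finally show "pmf (map_pmf ?h (pJ x D)) A = pmf (pJ x D) A" .
qed

lemma exch_pmW:
  assumes x: "cm x"
  shows "exchangeable_law m (pmW x m)"
  unfolding exchangeable_law_def
proof (intro allI impI)
  fix \<pi> assume p: "\<pi> permutes {0..<m}"
  define D where "D = {0..<(m::nat)}"
  define \<sigma> where "\<sigma> = (\<lambda>t::nat list. map (\<lambda>i. t ! \<pi> i) [0..<m])"
  define h where "h = (\<lambda>I. {k\<in>D. \<pi> k \<in> I})"
  let ?q = "pJ x D"
  have "measure_pmf (map_pmf \<sigma> (pmW x m)) = distr (Wm x m) (count_space UNIV) \<sigma>"
    by (simp add: map_pmf_rep_eq pmW)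
  also have "\<dots> = distr (stream_space (measure_pmf ?q)) (count_space UNIV) (\<sigma> \<circ> wsg_times m)"
    unfolding Wm_def D_def by (rule distr_distr) (auto intro: meas_wsg')
  also have "\<sigma> \<circ> wsg_times m = wsg_times m \<circ> smap h"
  proof
    fix \<omega> :: "nat set stream"
    have "\<sigma> (wsg_times m \<omega>) = map (\<lambda>i. Suc (LEAST j. \<pi> i \<in> \<omega> !! j)) [0..<m]"
      unfolding \<sigma>_def
    proof (intro map_cong refl)
      fix i assume "i \<in> set [0..<m]"
      then have "\<pi> i < m" using permutes_in_image[OF p, of i] by simp
      then show "wsg_times m \<omega> ! \<pi> i = Suc (LEAST j. \<pi> i \<in> \<omega> !! j)"
        by (simp add: wsg_times_def)
    qed
    also have "\<dots> = wsg_times m (smap h \<omega>)"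
      unfolding wsg_times_def by (intro map_cong refl) (simp add: h_def D_def)
    finally show "(\<sigma> \<circ> wsg_times m) \<omega> = (wsg_times m \<circ> smap h) \<omega>" by simp
  qed
  also have "distr (stream_space (measure_pmf ?q)) (count_space UNIV) (wsg_times m \<circ> smap h)
     = distr (distr (stream_space (measure_pmf ?q)) (stream_space (count_space UNIV)) (smap h)) (count_space UNIV) (wsg_times m)"
    by (rule distr_distr[symmetric]) (auto intro: meas_wsg measurable_smap)
  also have "distr (stream_space (measure_pmf ?q)) (stream_space (count_space UNIV)) (smap h)
     = stream_space (distr (measure_pmf ?q) (count_space UNIV) h)"
    by (rule distr_smap_stream_space) (auto simp: prob_space_measure_pmf)
  also have "distr (measure_pmf ?q) (count_space UNIV) h = measure_pmf ?q"
    using pJ_perm[OF x _ p[folded D_def]] by (simp add: map_pmf_rep_eq[symmetric] h_def D_def)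
  also have "distr (stream_space (measure_pmf ?q)) (count_space UNIV) (wsg_times m) = measure_pmf (pmW x m)"
    by (simp add: pmW Wm_def D_def)
  finally show "map_pmf (\<lambda>t. map (\<lambda>i. t ! \<pi> i) [0..<m]) (pmW x m) = pmW x m"
    unfolding \<sigma>_def measure_pmf_inject .
qed


lemma least_iff:
  fixes P :: "nat \<Rightarrow> bool"
  assumes "\<exists>j. P j"
  shows "a < Suc (LEAST j. P j) \<longleftrightarrow> (\<forall>j<a. \<not> P j)"
proof
  assume h: "a < Suc (LEAST j. P j)"
  show "\<forall>j<a. \<not> P j"
  proof (intro allI impI)
    fix j assume "j < a"
    then have "j < (LEAST j. P j)" using h by simp
    then show "\<not> P j" by (rule not_less_Least)
  qed
next
  assume a: "\<forall>j<a. \<not> P j"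
  show "a < Suc (LEAST j. P j)"
  proof (rule ccontr)
    assume "\<not> a < Suc (LEAST j. P j)"
    then have "(LEAST j. P j) < a" by simp
    moreover have "P (LEAST j. P j)" using assms by (rule LeastI_ex)
    ultimately show False using a by blast
  qed
qed

lemma ev_eq:
  fixes \<omega> :: "nat set stream"
  assumes ex: "\<forall>i\<in>{..<m}. \<exists>j. i \<in> \<omega> !! j" and n: "length n = m" and N: "\<forall>v\<in>set n. v \<le> N"
  shows "(\<forall>i<m. n ! i < wsg_times m \<omega> ! i) \<longleftrightarrow> (\<forall>j<N. \<forall>i<m. j < n ! i \<longrightarrow> i \<notin> \<omega> !! j)"
proof -
  have w: "wsg_times m \<omega> ! i = Suc (LEAST j. i \<in> \<omega> !! j)" if "i < m" for i
    using that by (simp add: wsg_times_def)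
  have li: "(n ! i < wsg_times m \<omega> ! i) \<longleftrightarrow> (\<forall>j<n ! i. i \<notin> \<omega> !! j)" if "i < m" for i
    unfolding w[OF that] by (rule least_iff) (use ex that in auto)
  have Nb: "n ! i \<le> N" if "i < m" for i using N that n by auto
  show ?thesis
  proof
    assume a: "\<forall>i<m. n ! i < wsg_times m \<omega> ! i"
    show "\<forall>j<N. \<forall>i<m. j < n ! i \<longrightarrow> i \<notin> \<omega> !! j"
    proof (intro allI impI)
      fix j i assume "j < N" "i < m" "j < n ! i"
      then show "i \<notin> \<omega> !! j" using a li by blast
    qed
  next
    assume a: "\<forall>j<N. \<forall>i<m. j < n ! i \<longrightarrow> i \<notin> \<omega> !! j"
    show "\<forall>i<m. n ! i < wsg_times m \<omega> ! i"
    proof (intro allI impI)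
      fix i assume i: "i < m"
      have "\<forall>j<n ! i. i \<notin> \<omega> !! j"
      proof (intro allI impI)
        fix j assume "j < n ! i"
        moreover have "j < N" using Nb[OF i] \<open>j < n ! i\<close> by simp
        ultimately show "i \<notin> \<omega> !! j" using a i by blast
      qed
      then show "n ! i < wsg_times m \<omega> ! i" using li[OF i] by simp
    qed
  qed
qed


lemma never_null:
  assumes x: "cm x" and x1: "x 1 < 1" and i: "i < m"
  shows "AE \<omega> in stream_space (measure_pmf (pJ x {0..<m})). \<exists>j. i \<in> \<omega> !! j"
proof -
  let ?q = "pJ x {0..<m}"
  let ?S = "stream_space (measure_pmf ?q)"
  interpret S: prob_space ?S by (rule prob_space.prob_space_stream_space[OF prob_space_measure_pmf])
  define Nv where "Nv = {\<omega>\<in>space ?S. \<forall>j. i \<notin> \<omega> !! j}"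
  have sp: "space ?S = UNIV" by (simp add: space_stream_space)
  have Nvs: "Nv \<in> sets ?S"
  proof -
    have "Nv = (\<Inter>j. (\<lambda>\<omega>. \<omega> !! j) -` {I. i \<notin> I})" unfolding Nv_def sp by auto
    moreover have "(\<lambda>\<omega>. \<omega> !! j) -` {I. i \<notin> I} \<inter> space ?S \<in> sets ?S" for j
      by (rule measurable_sets[OF measurable_snth]) simp
    ultimately show ?thesis unfolding sp by auto
  qed
  have x1n: "0 \<le> x 1" using x unfolding cm_def by (metis nabla_0)
  have q1: "measure_pmf.prob ?q {I. i \<notin> I} = x 1"
  proof -
    have "{I. i \<notin> I} = {A. A \<inter> {i} = {}}" by auto
    then show ?thesis using pJ_avoid[OF x, of "{0..<m}" "{i}"] i by simp
  qed
  have le: "measure ?S Nv \<le> x 1 ^ N" for N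
  proof -
    have "measure ?S Nv \<le> measure ?S {\<omega>\<in>space ?S. \<forall>j<N. \<omega> !! j \<in> {I. i \<notin> I}}"
      by (rule S.finite_measure_mono[OF _ prefix_sets]) (auto simp: Nv_def)
    also have "\<dots> = (\<Prod>j<N. measure_pmf.prob ?q {I. i \<notin> I})"
      by (rule measure_stream_prefix)
    also have "\<dots> = x 1 ^ N" by (simp add: q1)
    finally show ?thesis .
  qed
  have "(\<lambda>N. x 1 ^ N) \<longlonglongrightarrow> 0"
    by (rule LIMSEQ_power_zero) (use x1 x1n in simp)
  then have "measure ?S Nv \<le> 0"
    by (rule LIMSEQ_le_const[OF _ exI[of _ 0]]) (intro allI impI le)
  then have "measure ?S Nv = 0" using measure_nonneg[of ?S Nv] by linarith
  then have "emeasure ?S Nv = 0" by (simp add: S.emeasure_eq_measure)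
  then show ?thesis
    by (subst AE_iff_measurable[OF Nvs]) (auto simp: Nv_def)
qed

lemma surv_pmW:
  assumes x: "cm x" and x1: "x 1 < 1" and n: "length n = m" and N: "\<forall>v\<in>set n. v \<le> N"
  shows "survival_pmf (pmW x m) n = (\<Prod>j<N. x (cnt n j))"
proof -
  let ?q = "pJ x {0..<m}"
  let ?S = "stream_space (measure_pmf ?q)"
  interpret S: prob_space ?S by (rule prob_space.prob_space_stream_space[OF prob_space_measure_pmf])
  define T where "T = {t :: nat list. \<forall>i<m. n ! i < t ! i}"
  define A where "A j = {I :: nat set. \<forall>i<m. j < n ! i \<longrightarrow> i \<notin> I}" for j
  define E where "E = {\<omega>\<in>space ?S. \<forall>j<N. \<omega> !! j \<in> A j}"
  have "survival_pmf (pmW x m) n = measure (Wm x m) T"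
    by (simp add: survival_pmf_def pmW T_def n)
  also have "\<dots> = measure ?S (wsg_times m -` T \<inter> space ?S)"
    unfolding Wm_def by (rule measure_distr[OF meas_wsg']) simp
  also have "\<dots> = measure ?S E"
  proof (rule measure_eq_AE)
    have "AE \<omega> in ?S. \<forall>i\<in>{..<m}. \<exists>j. i \<in> \<omega> !! j"
      by (rule eventually_ball_finite) (auto intro: never_null[OF x x1])
    then show "AE \<omega> in ?S. (\<omega> \<in> wsg_times m -` T \<inter> space ?S) = (\<omega> \<in> E)"
    proof (rule AE_mp, intro AE_I2 impI)
      fix \<omega> assume sp: "\<omega> \<in> space ?S" and ex: "\<forall>i\<in>{..<m}. \<exists>j. i \<in> \<omega> !! j"
      have "(\<omega> \<in> wsg_times m -` T) \<longleftrightarrow> (\<forall>i<m. n ! i < wsg_times m \<omega> ! i)"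
        by (simp add: T_def)
      also have "\<dots> \<longleftrightarrow> (\<forall>j<N. \<forall>i<m. j < n ! i \<longrightarrow> i \<notin> \<omega> !! j)"
        by (rule ev_eq[OF ex n N])
      also have "\<dots> \<longleftrightarrow> (\<forall>j<N. \<omega> !! j \<in> A j)"
        by (simp add: A_def)
      finally have c: "(\<omega> \<in> wsg_times m -` T) = (\<forall>j<N. \<omega> !! j \<in> A j)" .
      show "(\<omega> \<in> wsg_times m -` T \<inter> space ?S) = (\<omega> \<in> E)"
        by (simp only: E_def Int_iff mem_Collect_eq c) (simp add: sp)
    qed
    show "wsg_times m -` T \<inter> space ?S \<in> sets ?S"
      by (rule measurable_sets[OF meas_wsg']) simp
    show "E \<in> sets ?S" unfolding E_def by (rule prefix_sets)
  qed
  also have "\<dots> = (\<Prod>j<N. measure_pmf.prob ?q (A j))"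
    unfolding E_def by (rule measure_stream_prefix)
  also have "\<dots> = (\<Prod>j<N. x (cnt n j))"
  proof (intro prod.cong refl)
    fix j
    define Sj where "Sj = {i. i < m \<and> j < n ! i}"
    have "A j = {I. I \<inter> Sj = {}}" by (auto simp: A_def Sj_def)
    moreover have "Sj \<subseteq> {0..<m}" by (auto simp: Sj_def)
    moreover have "card Sj = cnt n j" by (simp add: Sj_def cnt_def length_filter_conv_card n)
    ultimately show "measure_pmf.prob ?q (A j) = x (cnt n j)"
      using pJ_avoid[OF x, of "{0..<m}" Sj] by simp
  qed
  finally show ?thesis .
qed


lemma wsg_props: "length (wsg_times d \<omega>) = d \<and> (\<forall>i<d. 0 < wsg_times d \<omega> ! i)"
  by (simp add: wsg_times_def)

lemma sufficiency:
  assumes M: "(\<lambda>k. if k = 0 then 1 else \<beta> k) \<in> M_infty"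
  shows "has_survival d (pmW (xx \<beta>) d) (Fbar \<beta> d) \<and> exchangeable_law d (pmW (xx \<beta>) d) \<and>
         is_wsg_law d (pmW (xx \<beta>) d) \<and> infinitely_extendible d (pmW (xx \<beta>) d)"
proof -
  have xe: "(\<lambda>k. if k = 0 then 1 else \<beta> k) = xx \<beta>" by (simp add: xx_def fun_eq_iff)
  let ?x = "xx \<beta>"
  have x: "cm ?x" using M unfolding xe M_infty_def cm_def by simp
  have x1: "?x 1 < 1" using M unfolding xe M_infty_def by simp
  have law: "is_law_on d (pmW ?x d)"
  proof -
    have "AE t in measure_pmf (pmW ?x d). t \<in> {t. length t = d \<and> (\<forall>i<d. 0 < t ! i)}"
      unfolding pmW Wm_def
      by (subst AE_distr_iff[OF meas_wsg']) (auto intro!: AE_I2 simp: wsg_props)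
    then show ?thesis unfolding is_law_on_def AE_measure_pmf_iff by blast
  qed
  have surv: "survival_pmf (pmW ?x d) n = Fbar \<beta> d n" if n: "length n = d" for n
  proof -
    have N: "\<forall>v\<in>set n. v \<le> sum_list n" by (simp add: member_le_sum_list)
    show ?thesis using surv_pmW[OF x x1 n N] Fbar_prod[OF n N] by simp
  qed
  have ext: "infinitely_extendible d (pmW ?x d)"
    unfolding infinitely_extendible_def
  proof (intro exI[of _ "Pm ?x"] conjI allI impI)
    show "prob_space (Pm ?x)"
      unfolding Pm_def by (rule prob_space.prob_space_distr[OF prob_space.prob_space_stream_space[OF Qm_prob[OF x]] meas_Tau[OF x]])
    show "sets (Pm ?x) = sets (stream_space (count_space UNIV))" by (simp add: Pm_def)
    fix m :: nat assume "1 \<le> m"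
    show "\<exists>pm. measure_pmf pm = distr (Pm ?x) (count_space UNIV) (stake m) \<and>
              exchangeable_law m pm \<and> is_wsg_law m pm \<and> (m = d \<longrightarrow> pm = pmW ?x d)"
      by (intro exI[of _ "pmW ?x m"] conjI impI)
         (simp_all add: pmW marginal[OF x] exch_pmW[OF x] is_wsg_pmW[OF x x1])
  qed
  show ?thesis
    using law surv ext exch_pmW[OF x] is_wsg_pmW[OF x x1] by (simp add: has_survival_def)
qed

theorem corollary4p2:
  fixes \<beta> :: "nat \<Rightarrow> real"
  shows "((\<forall>d\<ge>2. is_discrete_survival d (Fbar \<beta> d)) \<longleftrightarrow>
            (\<lambda>k. if k = 0 then 1 else \<beta> k) \<in> M_infty)
       \<and> ((\<lambda>k. if k = 0 then 1 else \<beta> k) \<in> M_infty \<longrightarrow>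
            (\<forall>d\<ge>2. \<exists>p. has_survival d p (Fbar \<beta> d) \<and> exchangeable_law d p \<and>
                        is_wsg_law d p \<and> infinitely_extendible d p))"
proof (intro conjI iffI impI allI)
  show "(\<lambda>k. if k = 0 then 1 else \<beta> k) \<in> M_infty" if "\<forall>d\<ge>2. is_discrete_survival d (Fbar \<beta> d)"
    using necessity[OF that] .
next
  fix d :: nat
  assume M: "(\<lambda>k. if k = 0 then 1 else \<beta> k) \<in> M_infty" and "2 \<le> d"
  show "is_discrete_survival d (Fbar \<beta> d)"
    using sufficiency[OF M, of d] unfolding is_discrete_survival_def by blast
next
  fix d :: nat
  assume M: "(\<lambda>k. if k = 0 then 1 else \<beta> k) \<in> M_infty" and "2 \<le> d"
  show "\<exists>p. has_survival d p (Fbar \<beta> d) \<and> exchangeable_law d p \<and> is_wsg_law d p \<and> infinitely_extendible d p"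
    using sufficiency[OF M, of d] by blast
qed


end
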